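(* Let $G$ be a connected non-complete graph. The following statements are equivalent. (i) $\mu_t(G)=n(G)-\gamma_c(G)$. (ii) There exists a connected dominating set $S$ of $G$ with $|S|=\gamma_c(G)$ such that for every pair $u,v$ of vertices of $G$ there exists a shortest $u,v$-path $u=y_0,y_1,\dots,y_{k'}=v$ with $\{y_1,\dots,y_{k'-1}\}\subseteq S$.
   Context: All graphs are finite, simple and undirected; $n(G)$ denotes the order of $G$. A connected dominating set of $G$ is a dominating set $D$ such that $G[D]$ is connected; the connected domination number $\gamma_c(G)$ is the minimum cardinality of a connected dominating set. Let $G$ be a connected graph and $X\subseteq V(G)$. Two vertices $x,y\in V(G)$ are $X$-visible if there exists a shortest $x,y$-path in $G$ none of whose internal vertices (i.e., vertices other than $x$ and $y$) belongs to $X$. The set $X$ is a total mutual-visibility set of $G$ if every two vertices of $G$ are $X$-visible (the empty set is allowed). The total mutual-visibility number $\mu_t(G)$ is the maximum cardinality of a total mutual-visibility set of $G$. *)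

theory Defs
  imports Main
begin

definition graph :: "'a set \<Rightarrow> ('a \<Rightarrow> 'a \<Rightarrow> bool) \<Rightarrow> bool" where
  "graph V E \<longleftrightarrow> finite V \<and> (\<forall>x y. E x y \<longrightarrow> x \<in> V \<and> y \<in> V) \<and>
     (\<forall>x y. E x y \<longrightarrow> E y x) \<and> (\<forall>x. \<not> E x x)"

definition walk :: "'a set \<Rightarrow> ('a \<Rightarrow> 'a \<Rightarrow> bool) \<Rightarrow> 'a list \<Rightarrow> bool" where
  "walk V E p \<longleftrightarrow> p \<noteq> [] \<and> set p \<subseteq> V \<and> (\<forall>i. Suc i < length p \<longrightarrow> E (p ! i) (p ! Suc i))"

definition walk_betw :: "'a set \<Rightarrow> ('a \<Rightarrow> 'a \<Rightarrow> bool) \<Rightarrow> 'a \<Rightarrow> 'a \<Rightarrow> 'a list \<Rightarrow> bool" where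
  "walk_betw V E x y p \<longleftrightarrow> walk V E p \<and> hd p = x \<and> last p = y"

definition shortest_path :: "'a set \<Rightarrow> ('a \<Rightarrow> 'a \<Rightarrow> bool) \<Rightarrow> 'a \<Rightarrow> 'a \<Rightarrow> 'a list \<Rightarrow> bool" where
  "shortest_path V E x y p \<longleftrightarrow> walk_betw V E x y p \<and>
     (\<forall>q. walk_betw V E x y q \<longrightarrow> length p \<le> length q)"

definition internal :: "'a list \<Rightarrow> 'a set" where
  "internal p = set (butlast (tl p))"

definition connected_graph :: "'a set \<Rightarrow> ('a \<Rightarrow> 'a \<Rightarrow> bool) \<Rightarrow> bool" where
  "connected_graph V E \<longleftrightarrow> (\<forall>x\<in>V. \<forall>y\<in>V. \<exists>p. walk_betw V E x y p)"

definition complete_graph :: "'a set \<Rightarrow> ('a \<Rightarrow> 'a \<Rightarrow> bool) \<Rightarrow> bool" where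
  "complete_graph V E \<longleftrightarrow> (\<forall>x\<in>V. \<forall>y\<in>V. x \<noteq> y \<longrightarrow> E x y)"

definition dominating_set :: "'a set \<Rightarrow> ('a \<Rightarrow> 'a \<Rightarrow> bool) \<Rightarrow> 'a set \<Rightarrow> bool" where
  "dominating_set V E D \<longleftrightarrow> D \<subseteq> V \<and> (\<forall>v\<in>V. v \<in> D \<or> (\<exists>u\<in>D. E u v))"

text \<open>G[D] connected: walks inside D (induced subgraph).\<close>
definition connected_dominating_set :: "'a set \<Rightarrow> ('a \<Rightarrow> 'a \<Rightarrow> bool) \<Rightarrow> 'a set \<Rightarrow> bool" where
  "connected_dominating_set V E D \<longleftrightarrow> dominating_set V E D \<and> connected_graph D E"

definition connected_domination_number :: "'a set \<Rightarrow> ('a \<Rightarrow> 'a \<Rightarrow> bool) \<Rightarrow> nat" where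
  "connected_domination_number V E = Min (card ` {D. connected_dominating_set V E D})"

definition visible :: "'a set \<Rightarrow> ('a \<Rightarrow> 'a \<Rightarrow> bool) \<Rightarrow> 'a set \<Rightarrow> 'a \<Rightarrow> 'a \<Rightarrow> bool" where
  "visible V E X x y \<longleftrightarrow> (\<exists>p. shortest_path V E x y p \<and> internal p \<inter> X = {})"

definition total_mutual_visibility_set :: "'a set \<Rightarrow> ('a \<Rightarrow> 'a \<Rightarrow> bool) \<Rightarrow> 'a set \<Rightarrow> bool" where
  "total_mutual_visibility_set V E X \<longleftrightarrow> X \<subseteq> V \<and> (\<forall>x\<in>V. \<forall>y\<in>V. visible V E X x y)"

definition total_mutual_visibility_number :: "'a set \<Rightarrow> ('a \<Rightarrow> 'a \<Rightarrow> bool) \<Rightarrow> nat" where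
  "total_mutual_visibility_number V E = Max (card ` {X. total_mutual_visibility_set V E X})"

end

theory Submission
  imports Defs
begin

lemma shortest_exists:
  assumes "connected_graph V E" "x \<in> V" "y \<in> V"
  shows "\<exists>p. shortest_path V E x y p"
proof -
  from assms obtain p where "walk_betw V E x y p" by (auto simp: connected_graph_def)
  from ex_has_least_nat[of "walk_betw V E x y" p length, OF this] show ?thesis
    by (auto simp: shortest_path_def)
qed

lemma len3:
  assumes w: "walk_betw V E a b p" and ab: "a \<noteq> b" and nab: "\<not> E a b"
  shows "\<exists>c d e r. p = c # d # e # r"
proof -
  have ne: "p \<noteq> []" and ed: "\<forall>i. Suc i < length p \<longrightarrow> E (p!i) (p!Suc i)"
    and h: "hd p = a" and l: "last p = b" using w by (auto simp: walk_betw_def walk_def)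
  show ?thesis
  proof (cases p)
    case Nil with ne show ?thesis by simp
  next
    case (Cons c q) note C1 = this
    show ?thesis
    proof (cases q)
      case Nil then show ?thesis using C1 h l ab by simp
    next
      case (Cons d s) note C2 = this
      show ?thesis
      proof (cases s)
        case Nil
        then have "E (p!0) (p!1)" using ed C1 C2 by auto
        then have False using C1 C2 Nil h l nab by simp
        then show ?thesis ..
      next
        case (Cons e r) then show ?thesis using C1 C2 by auto
      qed
    qed
  qed
qed

lemma len3_facts:
  assumes w: "walk_betw V E a b p" and ab: "a \<noteq> b" and nab: "\<not> E a b"
  shows "\<exists>d. d \<in> internal p \<and> d \<in> V \<and> E a d"
proof -
  obtain c d e r where p: "p = c # d # e # r" using len3[OF assms] by blast
  have ed: "\<forall>i. Suc i < length p \<longrightarrow> E (p!i) (p!Suc i)" and "hd p = a" and "set p \<subseteq> V"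
    using w by (auto simp: walk_betw_def walk_def)
  then have "E a d" using p by (metis One_nat_def Suc_less_eq length_Cons list.sel(1) nth_Cons_0 nth_Cons_Suc zero_less_Suc)
  moreover have "d \<in> internal p" using p by (simp add: internal_def)
  moreover have "d \<in> V" using p \<open>set p \<subseteq> V\<close> by simp
  ultimately show ?thesis by blast
qed

lemma set_path: "p \<noteq> [] \<Longrightarrow> set p \<subseteq> {hd p, last p} \<union> internal p"
proof (cases p)
  case (Cons a q)
  show ?thesis
  proof (cases "q = []")
    case True then show ?thesis using Cons by simp
  next
    case False
    then have "set q = set (butlast q) \<union> {last q}"
      by (metis append_butlast_last_id set_append empty_set list.simps(15) Un_insert_right sup_bot.right_neutral)
    then show ?thesis using Cons False by (auto simp: internal_def)
  qed
qed simp

lemma internal_sub: "internal p \<subseteq> set p"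
  unfolding internal_def by (cases p) (auto dest: in_set_butlastD)

lemma cds_compl:
  assumes g: "graph V E" and c: "connected_graph V E" and nc: "\<not> complete_graph V E"
    and X: "total_mutual_visibility_set V E X"
  shows "connected_dominating_set V E (V - X)"
proof -
  have sym: "\<And>x y. E x y \<Longrightarrow> E y x" using g by (auto simp: graph_def)
  have vis: "\<And>x y. x \<in> V \<Longrightarrow> y \<in> V \<Longrightarrow> \<exists>p. shortest_path V E x y p \<and> internal p \<inter> X = {}"
    using X by (auto simp: total_mutual_visibility_set_def visible_def)
  have dom: "dominating_set V E (V - X)"
    unfolding dominating_set_def
  proof (intro conjI ballI)
    fix v assume v: "v \<in> V"
    show "v \<in> V - X \<or> (\<exists>u\<in>V - X. E u v)"
    proof (cases "v \<in> X")
      case False then show ?thesis using v by blast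
    next
      case vX: True
      show ?thesis
      proof (cases "\<exists>y\<in>V. y \<noteq> v \<and> \<not> E v y")
        case True
        then obtain y where y: "y \<in> V" "y \<noteq> v" "\<not> E v y" by blast
        obtain p where p: "shortest_path V E v y p" "internal p \<inter> X = {}" using vis[OF v y(1)] by blast
        obtain d where "d \<in> internal p" "d \<in> V" "E v d"
          using len3_facts[of V E v y p] p y by (auto simp: shortest_path_def)
        then show ?thesis using p sym by blast
      next
        case False
        then have univ: "\<And>y. y \<in> V \<Longrightarrow> y \<noteq> v \<Longrightarrow> E v y" by blast
        obtain a b where ab: "a \<in> V" "b \<in> V" "a \<noteq> b" "\<not> E a b" using nc by (auto simp: complete_graph_def)
        obtain p where p: "shortest_path V E a b p" "internal p \<inter> X = {}" using vis[OF ab(1,2)] by blast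
        obtain d where d: "d \<in> internal p" "d \<in> V"
          using len3_facts[of V E a b p] p ab by (auto simp: shortest_path_def)
        then have "d \<notin> X" using p by blast
        then have "d \<noteq> v" using vX by blast
        then have "E v d" using univ d by blast
        then show ?thesis using d \<open>d \<notin> X\<close> sym by blast
      qed
    qed
  qed auto
  have con: "connected_graph (V - X) E"
    unfolding connected_graph_def
  proof (intro ballI)
    fix u v assume u: "u \<in> V - X" and v: "v \<in> V - X"
    obtain p where p: "shortest_path V E u v p" "internal p \<inter> X = {}" using vis u v by blast
    then have w: "walk V E p" "hd p = u" "last p = v"
      by (auto simp: shortest_path_def walk_betw_def)
    then have "set p \<subseteq> V" "p \<noteq> []" by (auto simp: walk_def)
    then have "set p \<subseteq> V - X" using set_path[of p] w p u v by blast
    then have "walk_betw (V - X) E u v p" using w by (auto simp: walk_betw_def walk_def)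
    then show "\<exists>p. walk_betw (V - X) E u v p" by blast
  qed
  show ?thesis using dom con by (simp add: connected_dominating_set_def)
qed

theorem proposition2p6:
  fixes V :: "'a set" and E :: "'a \<Rightarrow> 'a \<Rightarrow> bool"
  assumes "graph V E" and "connected_graph V E" and "\<not> complete_graph V E"
  shows "total_mutual_visibility_number V E = card V - connected_domination_number V E
     \<longleftrightarrow> (\<exists>S. connected_dominating_set V E S \<and> card S = connected_domination_number V E \<and>
            (\<forall>u\<in>V. \<forall>v\<in>V. \<exists>p. shortest_path V E u v p \<and> internal p \<subseteq> S))"
proof -
  let ?g = "connected_domination_number V E"
  let ?m = "total_mutual_visibility_number V E"
  have fin: "finite V" using assms(1) by (simp add: graph_def)
  have Vc: "connected_dominating_set V E V"
    using assms(2) by (auto simp: connected_dominating_set_def dominating_set_def)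
  have cdsV: "\<And>D. connected_dominating_set V E D \<Longrightarrow> D \<subseteq> V"
    by (auto simp: connected_dominating_set_def dominating_set_def)
  have finA: "finite (card ` {D. connected_dominating_set V E D})"
    using cdsV fin by (intro finite_imageI) (metis (no_types, lifting) finite_Pow_iff mem_Collect_eq PowI rev_finite_subset subsetI)
  have gle: "\<And>D. connected_dominating_set V E D \<Longrightarrow> ?g \<le> card D"
    unfolding connected_domination_number_def using finA by (intro Min_le) auto
  have tV: "\<And>X. total_mutual_visibility_set V E X \<Longrightarrow> X \<subseteq> V"
    by (auto simp: total_mutual_visibility_set_def)
  have finB: "finite (card ` {X. total_mutual_visibility_set V E X})"
    using tV fin by (intro finite_imageI) (metis (no_types, lifting) finite_Pow_iff mem_Collect_eq PowI rev_finite_subset subsetI)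
  have emp: "total_mutual_visibility_set V E {}"
    using shortest_exists[OF assms(2)] by (auto simp: total_mutual_visibility_set_def visible_def)
  obtain X0 where X0: "total_mutual_visibility_set V E X0" "card X0 = ?m"
    unfolding total_mutual_visibility_number_def using finB emp
    by (metis (mono_tags, lifting) Max_in empty_iff image_iff image_is_empty mem_Collect_eq)
  have mge: "\<And>X. total_mutual_visibility_set V E X \<Longrightarrow> card X \<le> ?m"
    unfolding total_mutual_visibility_number_def using finB by (intro Max_ge) auto
  have bound: "\<And>X. total_mutual_visibility_set V E X \<Longrightarrow> card X + ?g \<le> card V"
  proof -
    fix X assume X: "total_mutual_visibility_set V E X"
    have "?g \<le> card (V - X)" using gle cds_compl[OF assms X] by blast
    moreover have "card (V - X) = card V - card X" using tV[OF X] fin by (simp add: card_Diff_subset finite_subset)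
    moreover have "card X \<le> card V" using tV[OF X] fin by (simp add: card_mono)
    ultimately show "card X + ?g \<le> card V" by linarith
  qed
  have gV: "?g \<le> card V" using gle Vc by blast
  show ?thesis
  proof
    assume eq: "?m = card V - ?g"
    let ?S = "V - X0"
    have "connected_dominating_set V E ?S" using cds_compl[OF assms X0(1)] .
    moreover have "card ?S = ?g"
      using tV[OF X0(1)] fin eq X0(2) gV card_mono[OF fin tV[OF X0(1)]]
      by (simp add: card_Diff_subset finite_subset)
    moreover have "\<forall>u\<in>V. \<forall>v\<in>V. \<exists>p. shortest_path V E u v p \<and> internal p \<subseteq> ?S"
    proof (intro ballI)
      fix u v assume "u \<in> V" "v \<in> V"
      then obtain p where p: "shortest_path V E u v p" "internal p \<inter> X0 = {}"
        using X0(1) unfolding total_mutual_visibility_set_def visible_def by blast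
      then have "set p \<subseteq> V" by (auto simp: shortest_path_def walk_betw_def walk_def)
      then have "internal p \<subseteq> ?S" using internal_sub[of p] p by blast
      then show "\<exists>p. shortest_path V E u v p \<and> internal p \<subseteq> ?S" using p by blast
    qed
    ultimately show "\<exists>S. connected_dominating_set V E S \<and> card S = ?g \<and>
            (\<forall>u\<in>V. \<forall>v\<in>V. \<exists>p. shortest_path V E u v p \<and> internal p \<subseteq> S)" by blast
  next
    assume "\<exists>S. connected_dominating_set V E S \<and> card S = ?g \<and>
            (\<forall>u\<in>V. \<forall>v\<in>V. \<exists>p. shortest_path V E u v p \<and> internal p \<subseteq> S)"
    then obtain S where S: "connected_dominating_set V E S" "card S = ?g"
      "\<forall>u\<in>V. \<forall>v\<in>V. \<exists>p. shortest_path V E u v p \<and> internal p \<subseteq> S" by blast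
    have tX: "total_mutual_visibility_set V E (V - S)"
      using S(3) unfolding total_mutual_visibility_set_def visible_def by blast
    have "card (V - S) = card V - ?g"
      using cdsV[OF S(1)] fin S(2) by (simp add: card_Diff_subset finite_subset)
    then have "card V - ?g \<le> ?m" using mge[OF tX] by simp
    moreover have "?m + ?g \<le> card V" using bound[OF X0(1)] X0(2) by simp
    ultimately show "?m = card V - ?g" by linarith
  qed
qed

end
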